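(* For every state $x$, \[ \Psi_1(x) \le \Psi_0(x) + \sqrt{\Psi_0(x)\cdot\frac{n}{\bar s_h}} + \frac{n}{4}\left(\frac{1}{\bar s_h}-\frac{1}{\bar s_a}\right). \]
   Context: There are $n$ processors with speeds $s_i>0$, $\mathcal{S}=\sum_i s_i$, arithmetic mean $\bar s_a=\mathcal{S}/n$ and harmonic mean $\bar s_h=n/\sum_i (1/s_i)$. There are $m$ unit tasks; a state $x$ assigns each task to a processor and $w_i(x)$ is the number of tasks on processor $i$. $\Psi_0(x)=\sum_i (w_i(x)-m s_i/\mathcal{S})^2/s_i$ and $\Psi_1(x)=\sum_i \frac{w_i(x)(w_i(x)+1)}{s_i}-\frac{m^2}{\mathcal{S}}-\frac{mn}{\mathcal{S}}+\frac{n}{4}\left(\frac{1}{\bar s_h}-\frac{1}{\bar s_a}\right)$. *)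

theory Defs
  imports "HOL-Analysis.Analysis"
begin

definition Stot :: "nat \<Rightarrow> (nat \<Rightarrow> real) \<Rightarrow> real" where
  "Stot n s = (\<Sum>i<n. s i)"

definition mean_a :: "nat \<Rightarrow> (nat \<Rightarrow> real) \<Rightarrow> real" where
  "mean_a n s = Stot n s / real n"

definition mean_h :: "nat \<Rightarrow> (nat \<Rightarrow> real) \<Rightarrow> real" where
  "mean_h n s = real n / (\<Sum>i<n. 1 / s i)"

definition is_state :: "nat \<Rightarrow> nat \<Rightarrow> (nat \<Rightarrow> nat) \<Rightarrow> bool" where
  "is_state n m x \<longleftrightarrow> (\<forall>j<m. x j < n)"

definition load :: "nat \<Rightarrow> (nat \<Rightarrow> nat) \<Rightarrow> nat \<Rightarrow> nat" where
  "load m x i = card {j. j < m \<and> x j = i}"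

definition Psi0 :: "nat \<Rightarrow> (nat \<Rightarrow> real) \<Rightarrow> nat \<Rightarrow> (nat \<Rightarrow> nat) \<Rightarrow> real" where
  "Psi0 n s m x = (\<Sum>i<n. (real (load m x i) - real m * s i / Stot n s)^2 / s i)"

definition Psi1 :: "nat \<Rightarrow> (nat \<Rightarrow> real) \<Rightarrow> nat \<Rightarrow> (nat \<Rightarrow> nat) \<Rightarrow> real" where
  "Psi1 n s m x = (\<Sum>i<n. real (load m x i) * (real (load m x i) + 1) / s i)
     - (real m)^2 / Stot n s - real m * real n / Stot n s
     + real n / 4 * (1 / mean_h n s - 1 / mean_a n s)"

end

theory Submission
  imports Defs
begin

lemma load_sum:
  assumes "\<forall>j<m. x j < n"
  shows "(\<Sum>i<n. real (load m x i)) = real m"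
  using assms
proof (induction m)
  case 0
  then show ?case by (simp add: load_def)
next
  case (Suc m)
  have L: "load (Suc m) x i = load m x i + (if x m = i then 1 else 0)" for i
  proof -
    have "{j. j < Suc m \<and> x j = i} = {j. j < m \<and> x j = i} \<union> (if x m = i then {m} else {})"
      by (auto simp: less_Suc_eq)
    then show ?thesis unfolding load_def by (auto simp: card_insert_if)
  qed
  have xm: "x m < n" using Suc.prems by auto
  have "(\<Sum>i<n. real (load (Suc m) x i)) = (\<Sum>i<n. real (load m x i)) + (\<Sum>i<n. (if x m = i then 1 else 0))"
  proof -
    have "(\<Sum>i<n. real (load (Suc m) x i)) = (\<Sum>i<n. real (load m x i) + (if x m = i then 1 else 0))"
      by (rule sum.cong) (simp_all add: L)
    then show ?thesis by (simp add: sum.distrib)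
  qed
  also have "(\<Sum>i<n. (if x m = i then 1 else 0::real)) = 1"
    using xm by (simp add: sum.delta)
  finally show ?case using Suc by simp
qed

theorem lemma26:
  fixes n m :: nat and s :: "nat \<Rightarrow> real" and x :: "nat \<Rightarrow> nat"
  assumes "n \<ge> 1"
    and "\<And>i. i < n \<Longrightarrow> s i > 0"
    and "is_state n m x"
  shows "Psi1 n s m x \<le> Psi0 n s m x + sqrt (Psi0 n s m x * (real n / mean_h n s))
           + real n / 4 * (1 / mean_h n s - 1 / mean_a n s)"
proof -
  define w where "w i = real (load m x i)" for i
  define S where "S = Stot n s"
  define H where "H = (\<Sum>i<n. 1 / s i)"
  define d where "d i = w i - real m * s i / S" for i
  have pos: "\<And>i. i < n \<Longrightarrow> s i > 0" by (rule assms(2))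
  have n0: "{..<n} \<noteq> {}" using assms(1) lessThan_empty_iff by (metis not_one_le_zero)
  have Spos: "S > 0" unfolding S_def Stot_def
    using sum_pos[of "{..<n}" s] n0 pos by auto
  have Hpos: "H > 0" unfolding H_def
    using sum_pos[of "{..<n}" "\<lambda>i. 1 / s i"] n0 pos by auto
  have wsum: "(\<Sum>i<n. w i) = real m"
    unfolding w_def using load_sum assms(3) by (simp add: is_state_def)
  have dsum: "(\<Sum>i<n. d i) = 0"
  proof -
    have "(\<Sum>i<n. d i) = (\<Sum>i<n. w i) - real m / S * (\<Sum>i<n. s i)"
      unfolding d_def by (simp add: sum_subtractf sum_distrib_left)
    also have "(\<Sum>i<n. s i) = S" by (simp add: S_def Stot_def)
    finally show ?thesis using wsum Spos by simp
  qed
  have P0: "Psi0 n s m x = (\<Sum>i<n. (d i)^2 / s i)"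
    unfolding Psi0_def d_def w_def S_def by simp
  have t1: "w i * (w i + 1) / s i = (d i)^2 / s i + 2 * real m / S * d i + (real m)^2 / S^2 * s i
      + d i / s i + real m / S" if "i < n" for i
  proof -
    have "s i \<noteq> 0" using pos[OF that] by simp
    then show ?thesis using Spos unfolding d_def
      by (simp add: field_simps power2_eq_square)
  qed
  have "(\<Sum>i<n. w i * (w i + 1) / s i) = (\<Sum>i<n. (d i)^2 / s i) + 2 * real m / S * (\<Sum>i<n. d i)
      + (real m)^2 / S^2 * (\<Sum>i<n. s i) + (\<Sum>i<n. d i / s i) + real n * (real m / S)"
    by (simp add: t1 sum.distrib sum_distrib_left)
  also have "(\<Sum>i<n. s i) = S" by (simp add: S_def Stot_def)
  finally have A: "(\<Sum>i<n. w i * (w i + 1) / s i) = Psi0 n s m x + (\<Sum>i<n. d i / s i)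
      + (real m)^2 / S + real m * real n / S"
    using dsum P0 Spos by (simp add: power2_eq_square field_simps)
  have P1: "Psi1 n s m x = Psi0 n s m x + (\<Sum>i<n. d i / s i)
      + real n / 4 * (1 / mean_h n s - 1 / mean_a n s)"
    unfolding Psi1_def using A by (simp add: w_def S_def)
  have nh: "real n / mean_h n s = H"
    unfolding mean_h_def H_def using assms(1) by simp
  have cs: "(\<Sum>i<n. d i / s i)^2 \<le> Psi0 n s m x * H"
  proof -
    have "(\<Sum>i<n. d i / s i) = (\<Sum>i<n. (d i / sqrt (s i)) * (1 / sqrt (s i)))"
    proof (rule sum.cong)
      fix i assume "i \<in> {..<n}"
      then have "s i > 0" using pos by simp
      then have "sqrt (s i) * sqrt (s i) = s i" by simp
      then show "d i / s i = (d i / sqrt (s i)) * (1 / sqrt (s i))" by simp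
    qed simp
    moreover have "(\<Sum>i<n. (d i / sqrt (s i))^2) = Psi0 n s m x"
      unfolding P0
    proof (rule sum.cong)
      fix i assume "i \<in> {..<n}"
      then have "s i > 0" using pos by simp
      then show "(d i / sqrt (s i))^2 = (d i)^2 / s i" by (simp add: power_divide)
    qed simp
    moreover have "(\<Sum>i<n. (1 / sqrt (s i))^2) = H"
      unfolding H_def
    proof (rule sum.cong)
      fix i assume "i \<in> {..<n}"
      then have "s i > 0" using pos by simp
      then show "(1 / sqrt (s i))^2 = 1 / s i" by (simp add: power_divide)
    qed simp
    ultimately show ?thesis
      using Cauchy_Schwarz_ineq_sum[of "\<lambda>i. d i / sqrt (s i)" "\<lambda>i. 1 / sqrt (s i)" "{..<n}"]
      by simp
  qed
  have "(\<Sum>i<n. d i / s i) \<le> sqrt (Psi0 n s m x * H)"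
    using cs real_le_rsqrt by blast
  then show ?thesis using P1 nh by simp
qed

end
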